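(* Let $k\geqslant 3$ and $\Delta\geqslant 3$ be integers, let $G$ be a finite, simple, connected graph of maximum degree $\Delta$, and let $s$ be a nonnegative integer with $s\leqslant \frac{k-5}{12}$. If $g_k(G)<f(s,\Delta)+1$, then $G$ has diameter at most $k+2s$.
   Context: For integers $m\geqslant 0$ and $\Delta$, let $f(m,\Delta)=\Delta\sum_{i=0}^{m-1}(\Delta-1)^i$ (so $f(0,\Delta)=0$). For a graph $G$, its $k$-th power $G^k$ is the graph on $V(G)$ in which two distinct vertices are adjacent iff their distance in $G$ is at most $k$. $\chi$ denotes the chromatic number and $\Delta(G)$ the maximum degree of $G$. The $k$-gap of $G$ is $g_k(G)=f(k,\Delta(G))+1-\chi(G^k)$. *)

theory Defs
  imports Main
begin

definition simple_graph :: "'a set \<Rightarrow> ('a \<Rightarrow> 'a \<Rightarrow> bool) \<Rightarrow> bool" where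
  "simple_graph V E \<longleftrightarrow> finite V \<and> (\<forall>u v. E u v \<longrightarrow> u \<in> V \<and> v \<in> V)
     \<and> (\<forall>u v. E u v \<longrightarrow> E v u) \<and> (\<forall>u. \<not> E u u)"

definition degree :: "'a set \<Rightarrow> ('a \<Rightarrow> 'a \<Rightarrow> bool) \<Rightarrow> 'a \<Rightarrow> nat" where
  "degree V E u = card {v \<in> V. E u v}"

definition max_degree :: "'a set \<Rightarrow> ('a \<Rightarrow> 'a \<Rightarrow> bool) \<Rightarrow> nat" where
  "max_degree V E = Max (degree V E ` V)"

definition walk :: "('a \<Rightarrow> 'a \<Rightarrow> bool) \<Rightarrow> 'a \<Rightarrow> 'a \<Rightarrow> nat \<Rightarrow> bool" where
  "walk E u v n \<longleftrightarrow> (\<exists>p :: nat \<Rightarrow> 'a. p 0 = u \<and> p n = v \<and> (\<forall>i<n. E (p i) (p (Suc i))))"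

definition connected_graph :: "'a set \<Rightarrow> ('a \<Rightarrow> 'a \<Rightarrow> bool) \<Rightarrow> bool" where
  "connected_graph V E \<longleftrightarrow> V \<noteq> {} \<and> (\<forall>u\<in>V. \<forall>v\<in>V. \<exists>n. walk E u v n)"

text \<open>Graph distance (meaningful for vertices joined by a walk).\<close>
definition gdist :: "('a \<Rightarrow> 'a \<Rightarrow> bool) \<Rightarrow> 'a \<Rightarrow> 'a \<Rightarrow> nat" where
  "gdist E u v = (LEAST n. walk E u v n)"

definition diameter :: "'a set \<Rightarrow> ('a \<Rightarrow> 'a \<Rightarrow> bool) \<Rightarrow> nat" where
  "diameter V E = Max {gdist E u v | u v. u \<in> V \<and> v \<in> V}"

definition power_adj :: "('a \<Rightarrow> 'a \<Rightarrow> bool) \<Rightarrow> nat \<Rightarrow> 'a \<Rightarrow> 'a \<Rightarrow> bool" where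
  "power_adj E k u v \<longleftrightarrow> u \<noteq> v \<and> (\<exists>n\<le>k. walk E u v n)"

definition proper_colouring :: "'a set \<Rightarrow> ('a \<Rightarrow> 'a \<Rightarrow> bool) \<Rightarrow> ('a \<Rightarrow> nat) \<Rightarrow> nat \<Rightarrow> bool" where
  "proper_colouring V E c n \<longleftrightarrow> (\<forall>v\<in>V. c v < n) \<and> (\<forall>u\<in>V. \<forall>v\<in>V. E u v \<longrightarrow> c u \<noteq> c v)"

definition chromatic_number :: "'a set \<Rightarrow> ('a \<Rightarrow> 'a \<Rightarrow> bool) \<Rightarrow> nat" where
  "chromatic_number V E = (LEAST n. \<exists>c. proper_colouring V E c n)"

definition fbound :: "nat \<Rightarrow> int \<Rightarrow> int" where
  "fbound m D = D * (\<Sum>i<m. (D - 1) ^ i)"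

definition kgap :: "nat \<Rightarrow> 'a set \<Rightarrow> ('a \<Rightarrow> 'a \<Rightarrow> bool) \<Rightarrow> int" where
  "kgap k V E = fbound k (int (max_degree V E)) + 1 - int (chromatic_number V (power_adj E k))"

end

theory Submission
  imports Defs
begin

locale sg =
  fixes V :: "'a set" and E :: "'a \<Rightarrow> 'a \<Rightarrow> bool" and D :: nat
  assumes sgr: "simple_graph V E" and conn: "connected_graph V E"
    and degb: "\<forall>v\<in>V. degree V E v \<le> D"
begin

lemma finV: "finite V" using sgr unfolding simple_graph_def by blast
lemma edgeV: "E u v \<Longrightarrow> u \<in> V \<and> v \<in> V" using sgr unfolding simple_graph_def by blast
lemma esym: "E u v \<Longrightarrow> E v u" using sgr unfolding simple_graph_def by blast
lemma irr: "\<not> E u u" using sgr unfolding simple_graph_def by blast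

lemma walk0: "walk E u v 0 \<longleftrightarrow> u = v"
  unfolding walk_def by auto

lemma walk_Suc: "walk E u v (Suc n) \<longleftrightarrow> (\<exists>u'. E u u' \<and> walk E u' v n)"
proof
  assume "walk E u v (Suc n)"
  then obtain p where p: "p 0 = u" "p (Suc n) = v" "\<forall>i<Suc n. E (p i) (p (Suc i))"
    unfolding walk_def by blast
  have "walk E (p 1) v n" unfolding walk_def
    by (rule exI[of _ "\<lambda>i. p (Suc i)"]) (use p in auto)
  moreover have "E u (p 1)" using p by force
  ultimately show "\<exists>u'. E u u' \<and> walk E u' v n" by blast
next
  assume "\<exists>u'. E u u' \<and> walk E u' v n"
  then obtain u' p where p: "E u u'" "p 0 = u'" "p n = v" "\<forall>i<n. E (p i) (p (Suc i))"
    unfolding walk_def by blast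
  show "walk E u v (Suc n)" unfolding walk_def
    apply (rule exI[of _ "\<lambda>i. if i = 0 then u else p (i - 1)"])
    using p by (auto simp: less_Suc_eq_0_disj)
qed

lemma walk_trans: "walk E u v m \<Longrightarrow> walk E v w n \<Longrightarrow> walk E u w (m + n)"
proof (induction m arbitrary: u)
  case 0 then show ?case by (simp add: walk0)
next
  case (Suc m) then show ?case by (auto simp: walk_Suc)
qed

lemma walk1: "E u v \<Longrightarrow> walk E u v 1"
  using walk_Suc[of u v 0] walk0 by auto

lemma walk_sym: "walk E u v n \<Longrightarrow> walk E v u n"
proof (induction n arbitrary: u)
  case 0 then show ?case by (simp add: walk0)
next
  case (Suc n)
  then obtain u' where "E u u'" "walk E u' v n" by (auto simp: walk_Suc)
  then have "walk E v u' n" "walk E u' u 1" using Suc.IH walk1 esym by auto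
  then show ?case using walk_trans by fastforce
qed

lemma walk_V: "u \<in> V \<Longrightarrow> walk E u v n \<Longrightarrow> v \<in> V"
proof (induction n arbitrary: u)
  case 0 then show ?case by (simp add: walk0)
next
  case (Suc n) then show ?case by (auto simp: walk_Suc dest: edgeV)
qed

lemma ex_walk: "u \<in> V \<Longrightarrow> v \<in> V \<Longrightarrow> \<exists>n. walk E u v n"
  using conn unfolding connected_graph_def by blast

lemma gd_walk: "u \<in> V \<Longrightarrow> v \<in> V \<Longrightarrow> walk E u v (gdist E u v)"
  unfolding gdist_def using ex_walk by (rule LeastI_ex) 

lemma gd_le: "walk E u v n \<Longrightarrow> gdist E u v \<le> n"
  unfolding gdist_def by (rule Least_le)

lemma gd_sym: "gdist E u v = gdist E v u"
proof -
  have "(\<lambda>n. walk E u v n) = (\<lambda>n. walk E v u n)" using walk_sym by blast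
  then show ?thesis unfolding gdist_def by simp
qed

lemma gd_self: "gdist E u u = 0"
  using gd_le[of u u 0] walk0 by simp

lemma gd_eq0: "u \<in> V \<Longrightarrow> v \<in> V \<Longrightarrow> gdist E u v = 0 \<longleftrightarrow> u = v"
  using gd_walk[of u v] walk0 gd_self by auto

lemma gd_tri: "u \<in> V \<Longrightarrow> v \<in> V \<Longrightarrow> w \<in> V \<Longrightarrow> gdist E u w \<le> gdist E u v + gdist E v w"
  using gd_le walk_trans gd_walk by blast

lemma gd_edge: "E u v \<Longrightarrow> gdist E u v \<le> 1"
  using gd_le walk1 by blast

lemma gd_step: assumes "u \<in> V" "y \<in> V" "gdist E u y = Suc j"
  shows "\<exists>u'. E u u' \<and> gdist E u' y = j"
proof -
  have "walk E u y (Suc j)" using gd_walk assms by metis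
  then obtain u' where u': "E u u'" "walk E u' y j" by (auto simp: walk_Suc)
  then have le: "gdist E u' y \<le> j" using gd_le by blast
  have "u' \<in> V" using u' edgeV by blast
  then have "Suc j \<le> 1 + gdist E u' y" using gd_tri[of u u' y] gd_edge[OF u'(1)] assms by simp
  then show ?thesis using le u' by (intro exI[of _ u']) auto
qed

lemma gd_point: assumes "x \<in> V" "r \<in> V" "l \<le> gdist E x r"
  shows "\<exists>z\<in>V. gdist E x z = l \<and> gdist E z r = gdist E x r - l"
  using assms
proof (induction l arbitrary: x)
  case 0 then show ?case using gd_self by auto
next
  case (Suc l)
  then obtain j where j: "gdist E x r = Suc j" by (cases "gdist E x r") auto
  then obtain x' where x': "E x x'" "gdist E x' r = j" using gd_step Suc.prems by blast
  have x'V: "x' \<in> V" using x' edgeV by blast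
  obtain z where z: "z \<in> V" "gdist E x' z = l" "gdist E z r = j - l"
    using Suc.IH[OF x'V Suc.prems(2)] x' j Suc.prems by auto
  have a: "gdist E x z \<le> Suc l" using gd_tri[of x x' z] gd_edge[OF x'(1)] z x'V Suc.prems by simp
  have b: "gdist E x r \<le> gdist E x z + gdist E z r" using gd_tri[of x z r] z Suc.prems by simp
  show ?case using a b z j Suc.prems by (intro bexI[of _ z]) auto
qed

end


fun ends :: "('a \<Rightarrow> 'a \<Rightarrow> bool) \<Rightarrow> 'a \<Rightarrow> 'a \<Rightarrow> nat \<Rightarrow> 'a set" where
  "ends E w u 0 = {u}"
| "ends E w u (Suc j) = (\<Union>u'\<in>{u'. E u u' \<and> u' \<noteq> w}. ends E u u' j)"

definition Bset :: "('a \<Rightarrow> 'a \<Rightarrow> bool) \<Rightarrow> 'a \<Rightarrow> 'a \<Rightarrow> nat \<Rightarrow> 'a set" where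
  "Bset E w u j = (\<Union>i\<in>{..j}. ends E w u i)"

definition pp :: "nat \<Rightarrow> nat \<Rightarrow> nat" where
  "pp q n = (\<Sum>i<n. q ^ i)"

lemma pp_Suc: "pp q (Suc n) = 1 + q * pp q n"
  unfolding pp_def sum.lessThan_Suc_shift by (simp add: sum_distrib_left)

lemma pp_mono: "m \<le> n \<Longrightarrow> pp q m \<le> pp q n"
  unfolding pp_def by (rule sum_mono2) auto

lemma pp_split: "m \<le> n \<Longrightarrow> pp q n = pp q m + (\<Sum>i\<in>{m..<n}. q ^ i)"
  unfolding pp_def
  using sum.atLeastLessThan_concat[of 0 m n "\<lambda>i. q ^ i"] by (simp add: atLeast0LessThan)

context sg
begin

lemma ends_walk: "y \<in> ends E w u j \<Longrightarrow> walk E u y j"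
proof (induction j arbitrary: w u)
  case 0 then show ?case by (simp add: walk0)
next
  case (Suc j) then show ?case by (auto simp: walk_Suc)
qed

lemma ends_V: "u \<in> V \<Longrightarrow> ends E w u j \<subseteq> V"
  using ends_walk walk_V by blast

lemma ends_gd: "y \<in> ends E w u j \<Longrightarrow> gdist E u y \<le> j"
  using ends_walk gd_le by blast

lemma nbr_card: "u \<in> V \<Longrightarrow> card {v. E u v} \<le> D"
proof -
  assume "u \<in> V"
  have "{v. E u v} = {v\<in>V. E u v}" using edgeV by blast
  then show ?thesis using degb \<open>u \<in> V\<close> unfolding degree_def by simp
qed

lemma nbr_fin: "finite {v. E u v}"
  using finV edgeV by (metis (no_types, lifting) mem_Collect_eq rev_finite_subset subsetI)

lemma nbr_minus1: "E w u \<Longrightarrow> card {u'. E u u' \<and> u' \<noteq> w} \<le> D - 1"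
proof -
  assume "E w u"
  then have "u \<in> V" "E u w" using edgeV esym by auto
  have "{u'. E u u' \<and> u' \<noteq> w} = {v. E u v} - {w}" by auto
  then show ?thesis using card_Diff_singleton[of w "{v. E u v}"] \<open>E u w\<close> nbr_card[OF \<open>u \<in> V\<close>]
    by simp
qed

lemma nbr_minus2: "E w u \<Longrightarrow> E u w' \<Longrightarrow> w \<noteq> w' \<Longrightarrow> card {u'. E u u' \<and> u' \<noteq> w \<and> u' \<noteq> w'} \<le> D - 2"
proof -
  assume a: "E w u" "E u w'" "w \<noteq> w'"
  then have "u \<in> V" "E u w" using edgeV esym by auto
  have "{u'. E u u' \<and> u' \<noteq> w \<and> u' \<noteq> w'} = {v. E u v} - {w} - {w'}" by auto
  moreover have "card ({v. E u v} - {w} - {w'}) = card {v. E u v} - 2"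
    using a \<open>E u w\<close> nbr_fin[of u] by (simp add: card_Diff_singleton)
  ultimately show ?thesis using nbr_card[OF \<open>u \<in> V\<close>] by simp
qed

lemma ends_card: "E w u \<Longrightarrow> card (ends E w u j) \<le> (D - 1) ^ j"
proof (induction j arbitrary: w u)
  case 0 then show ?case by simp
next
  case (Suc j)
  let ?S = "{u'. E u u' \<and> u' \<noteq> w}"
  have fS: "finite ?S" using nbr_fin[of u] by (rule rev_finite_subset) auto
  have "card (ends E w u (Suc j)) \<le> (\<Sum>u'\<in>?S. card (ends E u u' j))"
    by (simp add: card_UN_le[OF fS])
  also have "\<dots> \<le> (\<Sum>u'\<in>?S. (D - 1) ^ j)"
    by (rule sum_mono) (use Suc.IH in auto)
  also have "\<dots> = card ?S * (D - 1) ^ j" by simp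
  also have "\<dots> \<le> (D - 1) * (D - 1) ^ j"
    using nbr_minus1[OF Suc.prems] by (rule mult_right_mono) auto
  finally show ?case by simp
qed

lemma geo_ends: "E w u \<Longrightarrow> y \<in> V \<Longrightarrow> gdist E u y = j \<Longrightarrow> j \<le> gdist E w y \<Longrightarrow> y \<in> ends E w u j"
proof (induction j arbitrary: w u)
  case 0 then show ?case using gd_eq0 edgeV by auto
next
  case (Suc j)
  have uV: "u \<in> V" using Suc.prems edgeV by blast
  obtain u' where u': "E u u'" "gdist E u' y = j" using gd_step[OF uV Suc.prems(2,3)] by blast
  have "u' \<noteq> w" using u' Suc.prems by auto
  moreover have "y \<in> ends E u u' j" using Suc.IH[OF u'(1) Suc.prems(2) u'(2)] Suc.prems by simp
  ultimately show ?case using u' by auto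
qed

lemma B_Suc: "Bset E w u (Suc j) = insert u (\<Union>u'\<in>{u'. E u u' \<and> u' \<noteq> w}. Bset E u u' j)"
proof -
  show ?thesis unfolding Bset_def atMost_Suc_eq_insert_0 by auto
qed

lemma B_card: "E w u \<Longrightarrow> card (Bset E w u j) \<le> pp (D - 1) (Suc j)"
proof -
  assume a: "E w u"
  have "card (Bset E w u j) \<le> (\<Sum>i\<le>j. card (ends E w u i))"
    unfolding Bset_def by (rule card_UN_le) simp
  also have "\<dots> \<le> (\<Sum>i\<le>j. (D - 1) ^ i)" by (rule sum_mono) (use ends_card a in auto)
  finally show ?thesis unfolding pp_def using lessThan_Suc_atMost by simp
qed

end


context sg
begin

definition Uball :: "'a \<Rightarrow> nat \<Rightarrow> 'a set" where
  "Uball z s = {y\<in>V. gdist E z y \<le> s}"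

lemma Bset_V: "u \<in> V \<Longrightarrow> Bset E w u j \<subseteq> V"
  unfolding Bset_def using ends_V by blast

lemma ar1:
  fixes X Y P pn A T1 T2 :: nat
  assumes "X \<le> (T1 - T2) + Y" "T2 \<le> T1" "Y + (A - (1 + (T2 + pn))) \<le> P" "1 + (T2 + pn) \<le> A"
  shows "X + (A - pn) \<le> 1 + (T1 + P)"
  using assms by linarith

lemma ar2:
  fixes X Y P A T1 c :: nat
  assumes "X \<le> c + (T1 + Y)" "c \<le> 1" "Y + A \<le> P"
  shows "X + A \<le> 1 + (T1 + P)"
  using assms by linarith

definition Gf :: "nat \<Rightarrow> nat \<Rightarrow> nat" where
  "Gf s m = pp (D - 1) (Suc s) + pp (D - 1) s - pp (D - 1) (s - m)"

lemma branch_bound: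
  assumes "E u u'" "z \<in> V" "gdist E u z = c" "n = s - c" "n \<le> Suc j"
  shows "card (Bset E u u' j - Uball z s) + pp (D - 1) n \<le> pp (D - 1) (Suc j)"
proof -
  have uV: "u \<in> V" and u'V: "u' \<in> V" using assms edgeV by auto
  have sub: "Bset E u u' j - Uball z s \<subseteq> (\<Union>i\<in>{n..<Suc j}. ends E u u' i)"
  proof
    fix y assume y: "y \<in> Bset E u u' j - Uball z s"
    then obtain i where i: "i \<le> j" "y \<in> ends E u u' i" unfolding Bset_def by auto
    have yV: "y \<in> V" using ends_V[OF u'V] i by blast
    have "gdist E z y \<le> gdist E z u + gdist E u u' + gdist E u' y"
      using gd_tri[of z u y] gd_tri[of u u' y] assms(2) uV u'V yV by simp
    also have "\<dots> \<le> c + 1 + i" using assms(3) gd_sym[of z u] gd_edge[OF assms(1)] ends_gd[OF i(2)] by simp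
    finally have "gdist E z y \<le> c + 1 + i" .
    then have "\<not> i < n" using y yV assms(4) unfolding Uball_def by auto
    then show "y \<in> (\<Union>i\<in>{n..<Suc j}. ends E u u' i)" using i by auto
  qed
  have "card (Bset E u u' j - Uball z s) \<le> card (\<Union>i\<in>{n..<Suc j}. ends E u u' i)"
    by (rule card_mono[OF _ sub]) (use finite_subset[OF _ finV] ends_V[OF u'V] in auto)
  also have "\<dots> \<le> (\<Sum>i\<in>{n..<Suc j}. card (ends E u u' i))" by (rule card_UN_le) simp
  also have "\<dots> \<le> (\<Sum>i\<in>{n..<Suc j}. (D - 1) ^ i)" by (rule sum_mono) (use ends_card assms(1) in auto)
  finally show ?thesis using pp_split[OF assms(5), of "D - 1"] by simp
qed

lemma Lrec:
  assumes D2: "D \<ge> 2" and zV: "z \<in> V"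
  shows "E w u \<Longrightarrow> gdist E u z = m \<Longrightarrow> gdist E w z = Suc m \<Longrightarrow> m + s \<le> j
     \<Longrightarrow> card (Bset E w u j - Uball z s) + Gf s m \<le> pp (D - 1) (Suc j)"
proof (induction m arbitrary: w u j)
  case 0
  have uV: "u \<in> V" using 0 edgeV by blast
  have uz: "u = z" using 0 gd_eq0[OF uV zV] by simp
  have sub: "Bset E w u j - Uball z s \<subseteq> (\<Union>i\<in>{Suc s..<Suc j}. ends E w u i)"
  proof
    fix y assume y: "y \<in> Bset E w u j - Uball z s"
    then obtain i where i: "i \<le> j" "y \<in> ends E w u i" unfolding Bset_def by auto
    have yV: "y \<in> V" using ends_V[OF uV] i by blast
    have "gdist E z y \<le> i" using ends_gd[OF i(2)] uz by simp
    then have "\<not> i \<le> s" using y yV unfolding Uball_def by auto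
    then show "y \<in> (\<Union>i\<in>{Suc s..<Suc j}. ends E w u i)" using i by auto
  qed
  have "card (Bset E w u j - Uball z s) \<le> card (\<Union>i\<in>{Suc s..<Suc j}. ends E w u i)"
    by (rule card_mono[OF _ sub]) (use finite_subset[OF _ finV] ends_V[OF uV] in auto)
  also have "\<dots> \<le> (\<Sum>i\<in>{Suc s..<Suc j}. card (ends E w u i))" by (rule card_UN_le) simp
  also have "\<dots> \<le> (\<Sum>i\<in>{Suc s..<Suc j}. (D - 1) ^ i)" by (rule sum_mono) (use ends_card 0 in auto)
  finally have "card (Bset E w u j - Uball z s) + pp (D - 1) (Suc s) \<le> pp (D - 1) (Suc j)"
    using pp_split[of "Suc s" "Suc j" "D - 1"] 0 by simp
  then show ?case unfolding Gf_def by simp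
next
  case (Suc m)
  have uV: "u \<in> V" and wV: "w \<in> V" using Suc.prems edgeV by auto
  obtain j' where j': "j = Suc j'" using Suc.prems by (cases j) auto
  obtain W' where W': "E u W'" "gdist E W' z = m" using gd_step[OF uV zV Suc.prems(2)] by blast
  have wW: "w \<noteq> W'"
  proof
    assume "w = W'"
    then have "gdist E w z = m" using W'(2) by simp
    then show False using Suc.prems(3) by simp
  qed
  let ?S2 = "{u'. E u u' \<and> u' \<noteq> w \<and> u' \<noteq> W'}"
  let ?U = "Uball z s"
  let ?P = "pp (D - 1) (Suc j')"
  let ?n = "s - Suc m"
  have fS2: "finite ?S2" using nbr_fin[of u] by (rule rev_finite_subset) auto
  have sub: "Bset E w u j - ?U \<subseteq> ({u} - ?U) \<union> ((\<Union>u'\<in>?S2. Bset E u u' j' - ?U) \<union> (Bset E u W' j' - ?U))"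
    unfolding j' B_Suc by auto
  have fin: "finite (Bset E w u j - ?U)"
    using finite_subset[OF _ finV] ends_V[OF uV] unfolding Bset_def by auto
  have c1: "card ({u} - ?U) \<le> (if Suc m \<le> s then 0 else 1)"
  proof (cases "Suc m \<le> s")
    case True
    then have "{u} - ?U = {}" using Suc.prems(2) gd_sym[of z u] uV unfolding Uball_def by auto
    then show ?thesis by simp
  next
    case False
    have "card ({u} - ?U) \<le> card {u}" by (rule card_mono) auto
    then show ?thesis using False by simp
  qed
  have "card (Bset E w u j - ?U) \<le> card (({u} - ?U) \<union> ((\<Union>u'\<in>?S2. Bset E u u' j' - ?U) \<union> (Bset E u W' j' - ?U)))"
  proof (rule card_mono)
    have "({u} - ?U) \<union> ((\<Union>u'\<in>?S2. Bset E u u' j' - ?U) \<union> (Bset E u W' j' - ?U)) \<subseteq> V"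
    proof -
      have "\<And>u'. E u u' \<Longrightarrow> Bset E u u' j' \<subseteq> V" using Bset_V edgeV by blast
      then show ?thesis using uV W'(1) by blast
    qed
    then show "finite (({u} - ?U) \<union> ((\<Union>u'\<in>?S2. Bset E u u' j' - ?U) \<union> (Bset E u W' j' - ?U)))"
      using finite_subset finV by blast
  qed (rule sub)
  also have "\<dots> \<le> card ({u} - ?U) + (card (\<Union>u'\<in>?S2. Bset E u u' j' - ?U) + card (Bset E u W' j' - ?U))"
    by (meson card_Un_le add_left_mono order_trans)
  also have "card (\<Union>u'\<in>?S2. Bset E u u' j' - ?U) \<le> (\<Sum>u'\<in>?S2. card (Bset E u u' j' - ?U))"
    by (rule card_UN_le[OF fS2])
  also have "\<dots> \<le> (\<Sum>u'\<in>?S2. ?P - pp (D - 1) ?n)"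
  proof (rule sum_mono)
    fix u' assume "u' \<in> ?S2"
    then have "E u u'" by simp
    have "?n \<le> Suc j'" using Suc.prems(4) j' by arith
    from branch_bound[OF \<open>E u u'\<close> zV Suc.prems(2), of ?n s j'] this
    show "card (Bset E u u' j' - ?U) \<le> ?P - pp (D - 1) ?n" by simp
  qed
  also have "\<dots> = card ?S2 * (?P - pp (D - 1) ?n)" by simp
  also have "\<dots> \<le> (D - 2) * (?P - pp (D - 1) ?n)"
    by (rule mult_right_mono[OF nbr_minus2[OF Suc.prems(1) W'(1) wW]]) simp
  finally have X: "card (Bset E w u j - ?U) \<le> card ({u} - ?U) + ((D - 2) * (?P - pp (D - 1) ?n) + card (Bset E u W' j' - ?U))"
    by simp
  have IH: "card (Bset E u W' j' - ?U) + Gf s m \<le> ?P"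
    using Suc.IH[OF W'(1) W'(2) Suc.prems(2)] Suc.prems(4) j' by simp
  have pn: "pp (D - 1) ?n \<le> ?P" using pp_mono Suc.prems(4) j' by simp
  have e1: "(D - 2) * (?P - pp (D - 1) ?n) = (D - 2) * ?P - (D - 2) * pp (D - 1) ?n"
    by (simp add: diff_mult_distrib2)
  have e2: "(D - 2) * pp (D - 1) ?n \<le> (D - 2) * ?P" using pn by simp
  have d12: "D - 1 = Suc (D - 2)" using D2 by arith
  have e3: "(D - 1) * ?P = (D - 2) * ?P + ?P" 
    unfolding d12 by simp
  have e4: "(D - 1) * pp (D - 1) ?n = (D - 2) * pp (D - 1) ?n + pp (D - 1) ?n" 
    unfolding d12 by simp
  have goalP: "pp (D - 1) (Suc j) = 1 + (D - 1) * ?P" using j' pp_Suc by simp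
  have ppS: "pp (D - 1) (s - m) \<le> pp (D - 1) s" "pp (D - 1) (s - Suc m) \<le> pp (D - 1) s"
    by (auto intro: pp_mono)
  show ?case
  proof (cases "m < s")
    case True
    then have sm: "s - m = Suc ?n" by simp
    have pS: "pp (D - 1) (s - m) = 1 + (D - 1) * pp (D - 1) ?n" using sm pp_Suc by simp
    have "card ({u} - ?U) = 0" using c1 True by simp
    have A: "1 + ((D - 2) * pp (D - 1) ?n + pp (D - 1) ?n) \<le> pp (D - 1) (Suc s) + pp (D - 1) s"
      using pS e4 ppS by linarith
    have X': "card (Bset E w u j - ?U) \<le> ((D - 2) * ?P - (D - 2) * pp (D - 1) ?n) + card (Bset E u W' j' - ?U)"
      using X e1 \<open>card ({u} - ?U) = 0\<close> by simp
    have IH': "card (Bset E u W' j' - ?U) + (pp (D - 1) (Suc s) + pp (D - 1) s - (1 + ((D - 2) * pp (D - 1) ?n + pp (D - 1) ?n))) \<le> ?P"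
      using IH unfolding Gf_def pS e4 .
    have "card (Bset E w u j - ?U) + (pp (D - 1) (Suc s) + pp (D - 1) s - pp (D - 1) ?n) \<le> 1 + ((D - 2) * ?P + ?P)"
      by (rule ar1[OF X' e2 IH' A])
    then show ?thesis unfolding Gf_def goalP e3 by simp
  next
    case False
    then have "?n = 0" "s - m = 0" by auto
    then have X': "card (Bset E w u j - ?U) \<le> card ({u} - ?U) + ((D - 2) * ?P + card (Bset E u W' j' - ?U))"
      using X by (simp add: pp_def)
    have c1': "card ({u} - ?U) \<le> 1" using c1 by (simp split: if_splits)
    have "Gf s (Suc m) = Gf s m" unfolding Gf_def using \<open>s - m = 0\<close> \<open>?n = 0\<close> by simp
    then show ?thesis using ar2[OF X' c1' IH] unfolding goalP e3 by simp
  qed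
qed


lemma KL:
  assumes D2: "D \<ge> 2" and xV: "x \<in> V" and zV: "z \<in> V" and dz: "gdist E x z = l"
    and l1: "Suc s \<le> l" and l2: "l + s \<le> k"
  shows "card ({y\<in>V. y \<noteq> x \<and> gdist E x y \<le> k} - Uball z s) + (1 + D * pp (D - 1) s) \<le> D * pp (D - 1) k"
proof -
  obtain l' where l': "l = Suc l'" using l1 by (cases l) auto
  obtain v1 where v1: "E x v1" "gdist E v1 z = l'" using gd_step[OF xV zV] dz l' by blast
  let ?N = "{v. E x v}"
  let ?U = "Uball z s"
  let ?Nk = "{y\<in>V. y \<noteq> x \<and> gdist E x y \<le> k}"
  have k1: "Suc (k - 1) = k" using l1 l2 by arith
  have cover: "?Nk \<subseteq> (\<Union>v\<in>?N. Bset E x v (k - 1))"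
  proof
    fix y assume y: "y \<in> ?Nk"
    then have yV: "y \<in> V" by simp
    have "gdist E x y \<noteq> 0" using y gd_eq0[OF xV yV] by auto
    then obtain d' where d': "gdist E x y = Suc d'" by (cases "gdist E x y") auto
    obtain v where v: "E x v" "gdist E v y = d'" using gd_step[OF xV yV d'] by blast
    have "y \<in> ends E x v d'" using geo_ends[OF v(1) yV v(2)] d' by simp
    moreover have "Suc d' \<le> k" using y d' by simp
    then have "d' \<le> k - 1" by arith
    ultimately show "y \<in> (\<Union>v\<in>?N. Bset E x v (k - 1))" using v unfolding Bset_def by auto
  qed
  have sub: "?Nk - ?U \<subseteq> (\<Union>v\<in>?N - {v1}. Bset E x v (k - 1)) \<union> (Bset E x v1 (k - 1) - ?U)"
    using cover by blast
  have fN: "finite (?N - {v1})" using nbr_fin by blast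
  have "card (?Nk - ?U) \<le> card ((\<Union>v\<in>?N - {v1}. Bset E x v (k - 1)) \<union> (Bset E x v1 (k - 1) - ?U))"
  proof (rule card_mono[OF _ sub])
    have "\<And>v. E x v \<Longrightarrow> Bset E x v (k - 1) \<subseteq> V" using Bset_V edgeV by blast
    then have "(\<Union>v\<in>?N - {v1}. Bset E x v (k - 1)) \<union> (Bset E x v1 (k - 1) - ?U) \<subseteq> V"
      using v1(1) by blast
    then show "finite ((\<Union>v\<in>?N - {v1}. Bset E x v (k - 1)) \<union> (Bset E x v1 (k - 1) - ?U))"
      using finite_subset finV by blast
  qed
  also have "\<dots> \<le> card (\<Union>v\<in>?N - {v1}. Bset E x v (k - 1)) + card (Bset E x v1 (k - 1) - ?U)"
    by (rule card_Un_le)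
  also have "card (\<Union>v\<in>?N - {v1}. Bset E x v (k - 1)) \<le> (\<Sum>v\<in>?N - {v1}. card (Bset E x v (k - 1)))"
    by (rule card_UN_le[OF fN])
  also have "\<dots> \<le> (\<Sum>v\<in>?N - {v1}. pp (D - 1) k)"
  proof (rule sum_mono)
    fix v assume "v \<in> ?N - {v1}"
    then have "E x v" by simp
    from B_card[OF this, of "k - 1"] show "card (Bset E x v (k - 1)) \<le> pp (D - 1) k" unfolding k1 .
  qed
  also have "\<dots> = card (?N - {v1}) * pp (D - 1) k" by simp
  also have "\<dots> \<le> (D - 1) * pp (D - 1) k"
  proof (rule mult_right_mono)
    have "card (?N - {v1}) = card ?N - 1" using v1(1) by (simp add: card_Diff_singleton)
    then show "card (?N - {v1}) \<le> D - 1" using nbr_card[OF xV] by simp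
  qed simp
  finally have c: "card (?Nk - ?U) \<le> (D - 1) * pp (D - 1) k + card (Bset E x v1 (k - 1) - ?U)" by simp
  have L: "card (Bset E x v1 (k - 1) - ?U) + Gf s l' \<le> pp (D - 1) k"
    using Lrec[OF D2 zV v1(1) v1(2), of s "k - 1"] dz l' l1 l2 k1 by simp
  have G: "Gf s l' = 1 + D * pp (D - 1) s"
  proof -
    have "s - l' = 0" using l1 l' by simp
    then have "Gf s l' = pp (D - 1) (Suc s) + pp (D - 1) s" unfolding Gf_def by (simp add: pp_def)
    also have "\<dots> = 1 + (D - 1) * pp (D - 1) s + pp (D - 1) s" by (simp add: pp_Suc)
    also have "\<dots> = 1 + D * pp (D - 1) s"
    proof -
      have "D = Suc (D - 1)" using D2 by arith
      then have "D * pp (D - 1) s = pp (D - 1) s + (D - 1) * pp (D - 1) s" by (metis mult_Suc)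
      then show ?thesis by simp
    qed
    finally show ?thesis .
  qed
  have "D = Suc (D - 1)" using D2 by arith
  then have Dk: "D * pp (D - 1) k = pp (D - 1) k + (D - 1) * pp (D - 1) k" by (metis mult_Suc)
  show ?thesis using c L G Dk by linarith
qed

end


lemma greedy:
  fixes R :: "'a \<Rightarrow> 'a \<Rightarrow> bool" and \<kappa> :: "'a \<Rightarrow> nat" and c0 :: "'a \<Rightarrow> nat"
  assumes finQ: "finite Q" and finP: "finite P" and disj: "P \<inter> Q = {}"
    and symR: "\<And>u v. R u v \<Longrightarrow> R v u" and irrR: "\<And>u. \<not> R u u"
    and c0b: "\<forall>v\<in>P. c0 v < N" and c0p: "\<forall>u\<in>P. \<forall>v\<in>P. R u v \<longrightarrow> c0 u \<noteq> c0 v"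
    and cond: "\<And>x T. x \<in> Q \<Longrightarrow> T \<subseteq> Q \<Longrightarrow> x \<notin> T \<Longrightarrow> (\<forall>y\<in>T. \<kappa> x \<le> \<kappa> y)
       \<Longrightarrow> card (c0 ` {y\<in>P. R x y}) + card {y\<in>T. R x y} < N"
  shows "\<exists>c. (\<forall>v\<in>P\<union>Q. c v < N) \<and> (\<forall>u\<in>P\<union>Q. \<forall>v\<in>P\<union>Q. R u v \<longrightarrow> c u \<noteq> c v)"
proof -
  have main: "\<exists>c. (\<forall>v\<in>P. c v = c0 v) \<and> (\<forall>v\<in>P\<union>T. c v < N) \<and> (\<forall>u\<in>P\<union>T. \<forall>v\<in>P\<union>T. R u v \<longrightarrow> c u \<noteq> c v)"
    if "T \<subseteq> Q" for T
    using that
  proof (induction "card T" arbitrary: T rule: less_induct)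
    case less
    show ?case
    proof (cases "T = {}")
      case True
      then show ?thesis using c0b c0p by (intro exI[of _ c0]) auto
    next
      case False
      have fT: "finite T" using less.prems finQ finite_subset by blast
      define mv where "mv = Min (\<kappa> ` T)"
      have "mv \<in> \<kappa> ` T" unfolding mv_def using fT False by (intro Min_in) auto
      then obtain x where x: "x \<in> T" "\<kappa> x = mv" by blast
      have xmin: "\<forall>y\<in>T. \<kappa> x \<le> \<kappa> y" using x fT unfolding mv_def by auto
      let ?T' = "T - {x}"
      have "card ?T' < card T" by (rule card_Diff1_less[OF fT x(1)])
      then obtain c' where c': "\<forall>v\<in>P. c' v = c0 v" "\<forall>v\<in>P\<union>?T'. c' v < N"
          "\<forall>u\<in>P\<union>?T'. \<forall>v\<in>P\<union>?T'. R u v \<longrightarrow> c' u \<noteq> c' v"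
        using less.hyps[of ?T'] less.prems by blast
      have xQ: "x \<in> Q" using x less.prems by blast
      have xP: "x \<notin> P" using xQ disj by blast
      let ?F = "c' ` {y\<in>P\<union>?T'. R x y}"
      have F: "?F \<subseteq> c0 ` {y\<in>P. R x y} \<union> c' ` {y\<in>?T'. R x y}" using c'(1) by auto
      have fT': "finite {y\<in>?T'. R x y}" using fT by simp
      have "card ?F \<le> card (c0 ` {y\<in>P. R x y} \<union> c' ` {y\<in>?T'. R x y})"
        by (rule card_mono[OF _ F]) (use fT' finP in \<open>auto intro: finite_imageI\<close>)
      also have "\<dots> \<le> card (c0 ` {y\<in>P. R x y}) + card (c' ` {y\<in>?T'. R x y})" by (rule card_Un_le)
      also have "\<dots> \<le> card (c0 ` {y\<in>P. R x y}) + card {y\<in>?T'. R x y}"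
        using card_image_le[OF fT'] by simp
      also have "\<dots> < N" using cond[OF xQ, of ?T'] less.prems xmin by auto
      finally have cF: "card ?F < N" .
      have "\<not> {..<N} \<subseteq> ?F"
      proof
        assume "{..<N} \<subseteq> ?F"
        then have "card {..<N} \<le> card ?F"
          by (rule card_mono[rotated]) (use fT finP in auto)
        then show False using cF by simp
      qed
      then obtain col where col: "col < N" "col \<notin> ?F" by auto
      define c where "c = c'(x := col)"
      have "\<forall>v\<in>P. c v = c0 v" using c'(1) xP unfolding c_def by auto
      moreover have "\<forall>v\<in>P\<union>T. c v < N" using c'(2) col unfolding c_def by auto
      moreover have "\<forall>u\<in>P\<union>T. \<forall>v\<in>P\<union>T. R u v \<longrightarrow> c u \<noteq> c v"
      proof (intro ballI impI)
        fix u v assume uv: "u \<in> P \<union> T" "v \<in> P \<union> T" "R u v"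
        show "c u \<noteq> c v"
        proof (cases "u = x")
          case True
          show ?thesis
          proof (cases "v = x")
            case True then show ?thesis using \<open>u = x\<close> uv(3) irrR[of x] by simp
          next
            case False
            then have "c' v \<in> ?F" using uv \<open>u = x\<close> by auto
            then show ?thesis using col False \<open>u = x\<close> unfolding c_def by auto
          qed
        next
          case False
          show ?thesis
          proof (cases "v = x")
            case True
            then have "c' u \<in> ?F" using uv False symR by auto
            then show ?thesis using col False True unfolding c_def by auto
          next
            case False
            then show ?thesis using c'(3) uv \<open>u \<noteq> x\<close> unfolding c_def by auto
          qed
        qed
      qed
      ultimately show ?thesis by blast
    qed
  qed
  show ?thesis using main[of Q] by blast
qed



context sg
begin

lemma padj_iff: "u \<in> V \<Longrightarrow> v \<in> V \<Longrightarrow> power_adj E k u v \<longleftrightarrow> u \<noteq> v \<and> gdist E u v \<le> k"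
  unfolding power_adj_def using gd_le gd_walk le_trans by blast

lemma padj_V: "power_adj E k u v \<Longrightarrow> u \<in> V \<and> v \<in> V"
proof -
  assume a: "power_adj E k u v"
  then obtain n where n: "walk E u v n" "u \<noteq> v" unfolding power_adj_def by blast
  then obtain n' where "n = Suc n'" by (cases n) (auto simp: walk0)
  then obtain u' where "E u u'" "walk E u' v n'" using n walk_Suc by auto
  then show ?thesis using edgeV walk_V by blast
qed

lemma padj_sym: "power_adj E k u v \<Longrightarrow> power_adj E k v u"
  unfolding power_adj_def using walk_sym by blast

lemma gd_tri2: "u \<in> V \<Longrightarrow> v \<in> V \<Longrightarrow> w \<in> V \<Longrightarrow> gdist E u w \<le> gdist E v u + gdist E v w"
  using gd_tri[of u v w] gd_sym[of u v] by simp

lemma colour_exists: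
  assumes D2: "D \<ge> 2" and ks: "12 * s + 5 \<le> k"
    and aV: "a \<in> V" and bV: "b \<in> V" and rV: "r \<in> V"
    and L: "L = k + 2 * s + 1" and dab: "gdist E a b = L"
    and h: "gdist E a r + gdist E b r = L" "L div 2 \<le> gdist E a r" "L div 2 \<le> gdist E b r"
    and cardAB: "card (Uball a s) \<le> card (Uball b s)"
  shows "\<exists>c. proper_colouring V (power_adj E k) c (D * pp (D - 1) k - D * pp (D - 1) s)"
proof -
  define N where "N = D * pp (D - 1) k - D * pp (D - 1) s"
  define A where "A = Uball a s"
  define B where "B = Uball b s"
  define P where "P = A \<union> B"
  define Q where "Q = V - P"
  define R where "R = power_adj E k"
  define m0 where "m0 = L div 2"
  have m0: "2 * m0 \<le> L" "L \<le> 2 * m0 + 1" unfolding m0_def by auto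
  define Nk where "Nk x = {y\<in>V. y \<noteq> x \<and> gdist E x y \<le> k}" for x
  have AV: "A \<subseteq> V" and BV: "B \<subseteq> V" unfolding A_def B_def Uball_def by auto
  have far: "k < gdist E y y'" if "y \<in> A" "y' \<in> B" for y y'
  proof -
    have yV: "y \<in> V" "y' \<in> V" using that AV BV by auto
    have "gdist E a b \<le> gdist E a y + gdist E y y' + gdist E y' b"
      using gd_tri[of a y b] gd_tri[of y y' b] aV bV yV by simp
    moreover have "gdist E a y \<le> s" "gdist E y' b \<le> s"
      using that gd_sym[of y' b] unfolding A_def B_def Uball_def by auto
    ultimately show ?thesis using dab L by simp
  qed
  have AB: "A \<inter> B = {}"
  proof (rule ccontr)
    assume "A \<inter> B \<noteq> {}"
    then obtain y where "y \<in> A" "y \<in> B" by blast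
    then show False using far[of y y] gd_self[of y] by simp
  qed
  have finV': "finite A" "finite B" using AV BV finV finite_subset by auto
  have Nk_R: "{y\<in>S. R x y} = {y\<in>S. y \<in> Nk x}" if "S \<subseteq> V" "x \<in> V" for S x
    using padj_iff[of x] that unfolding R_def Nk_def by auto
  have Nkfin: "finite (Nk x)" for x unfolding Nk_def using finV by simp
  have DPP: "D * pp (D - 1) s \<le> D * pp (D - 1) k" using pp_mono ks by simp

  have caseR: "card B + card (Nk x - P) < N"
    if x: "x \<in> V" "x \<notin> P" "gdist E x a \<le> k - s" "gdist E x b \<le> k - s" for x
  proof -
    have "s < gdist E a x" using x aV unfolding P_def A_def Uball_def by auto
    then have l1: "Suc s \<le> gdist E x a" using gd_sym[of a x] by simp
    have l2: "gdist E x a + s \<le> k" using x ks by simp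
    have K: "card (Nk x - Uball a s) + (1 + D * pp (D - 1) s) \<le> D * pp (D - 1) k"
      using KL[OF D2 x(1) aV refl l1 l2] unfolding Nk_def .
    have BN: "B \<subseteq> Nk x - A"
    proof
      fix y assume y: "y \<in> B"
      have yV: "y \<in> V" using y BV by auto
      have "gdist E x y \<le> gdist E x b + gdist E b y" using gd_tri[OF x(1) bV yV] .
      moreover have "gdist E b y \<le> s" using y unfolding B_def Uball_def by auto
      ultimately have "gdist E x y \<le> k" using x ks by simp
      moreover have "y \<noteq> x" using y x unfolding P_def by auto
      moreover have "y \<notin> A" using y AB by auto
      ultimately show "y \<in> Nk x - A" unfolding Nk_def using yV by auto
    qed
    have eq: "Nk x - A = B \<union> (Nk x - P)" using BN unfolding P_def by auto
    have "card (Nk x - A) = card B + card (Nk x - P)"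
      unfolding eq by (rule card_Un_disjoint) (use finV' Nkfin in \<open>auto simp: P_def\<close>)
    then show ?thesis using K DPP unfolding N_def A_def by linarith
  qed
  have rP: "r \<notin> P"
  proof
    assume "r \<in> P"
    then have "gdist E a r \<le> s \<or> gdist E b r \<le> s" unfolding P_def A_def B_def Uball_def by auto
    then show False using h m0 L ks unfolding m0_def by linarith
  qed
  have cBN: "card B < N"
    using caseR[OF rV rP] h m0 L ks gd_sym[of r a] gd_sym[of r b] unfolding m0_def by linarith

  obtain hA where hA: "bij_betw hA A {0..<card A}" using ex_bij_betw_finite_nat[OF finV'(1)] by blast
  obtain hB where hB: "bij_betw hB B {0..<card B}" using ex_bij_betw_finite_nat[OF finV'(2)] by blast
  define c0 where "c0 y = (if y \<in> A then hA y else hB y)" for y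
  have c0P: "c0 y < card B" if "y \<in> P" for y
  proof (cases "y \<in> A")
    case True
    then have "hA y < card A" using hA unfolding bij_betw_def by auto
    then show ?thesis using True cardAB unfolding c0_def A_def B_def by simp
  next
    case False
    then have "y \<in> B" using that unfolding P_def by auto
    then show ?thesis using False hB unfolding c0_def bij_betw_def by auto
  qed
  have c0b: "\<forall>v\<in>P. c0 v < N" using c0P cBN by force
  have c0p: "\<forall>u\<in>P. \<forall>v\<in>P. R u v \<longrightarrow> c0 u \<noteq> c0 v"
  proof (intro ballI impI)
    fix u v assume uv: "u \<in> P" "v \<in> P" "R u v"
    have uvV: "u \<in> V" "v \<in> V" using uv AV BV unfolding P_def by auto
    have ne: "u \<noteq> v" "gdist E u v \<le> k" using uv(3) padj_iff[OF uvV] unfolding R_def by auto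
    consider "u \<in> A" "v \<in> A" | "u \<in> B" "v \<in> B" "u \<notin> A" "v \<notin> A" | "u \<in> A" "v \<in> B" | "u \<in> B" "v \<in> A"
      using uv unfolding P_def by blast
    then show "c0 u \<noteq> c0 v"
    proof cases
      case 1 then show ?thesis using hA ne unfolding c0_def bij_betw_def inj_on_def by auto
    next
      case 2 then show ?thesis using hB ne unfolding c0_def bij_betw_def inj_on_def by auto
    next
      case 3 then show ?thesis using far[of u v] ne by simp
    next
      case 4 then show ?thesis using far[of v u] ne gd_sym[of u v] by simp
    qed
  qed

  have cond: "card (c0 ` {y\<in>P. R x y}) + card {y\<in>T. R x y} < N"
    if x: "x \<in> Q" and T: "T \<subseteq> Q" "x \<notin> T" "\<forall>y\<in>T. gdist E r x \<le> gdist E r y" for x T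
  proof -
    have xV: "x \<in> V" and xP: "x \<notin> P" using x unfolding Q_def by auto
    have PV: "P \<subseteq> V" and TV: "T \<subseteq> V" using AV BV T unfolding P_def Q_def by auto
    have TP: "T \<inter> P = {}" using T unfolding Q_def by auto
    have fPR: "finite {y\<in>P. R x y}" using finV' unfolding P_def by auto
    have "finite T" using finV TV finite_subset by blast
    then have fTR: "finite {y\<in>T. R x y}" by simp
    have ci: "card (c0 ` {y\<in>P. R x y}) \<le> card {y\<in>P. R x y}" by (rule card_image_le[OF fPR])
    show ?thesis
    proof (cases "gdist E x a \<le> k - s \<and> gdist E x b \<le> k - s")
      case True
      have "c0 ` {y\<in>P. R x y} \<subseteq> {0..<card B}" using c0P by auto
      then have c1: "card (c0 ` {y\<in>P. R x y}) \<le> card B" using card_mono[of "{0..<card B}"] by fastforce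
      have "{y\<in>T. R x y} \<subseteq> Nk x - P" using Nk_R[OF TV xV] TP by auto
      then have c2: "card {y\<in>T. R x y} \<le> card (Nk x - P)" using Nkfin by (intro card_mono) auto
      show ?thesis using c1 c2 caseR[OF xV xP] True by linarith
    next
      case False
      define t where "t = gdist E x r"
      have ta: "gdist E x a \<le> t + gdist E a r" using gd_tri[OF xV rV aV] gd_sym[of r a] unfolding t_def by simp
      have tb: "gdist E x b \<le> t + gdist E b r" using gd_tri[OF xV rV bV] gd_sym[of r b] unfolding t_def by simp
      have tlow: "Suc s \<le> t" using False ta tb h m0 L ks by linarith
      obtain z l where z: "z \<in> V" "gdist E x z = l" "Suc s \<le> l" "l + s \<le> k" "gdist E z r + l = t"
          and zP: "Uball z s \<inter> P = {}"
      proof (cases "t \<le> k - 3 * s - 1 + m0")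
        case True
        define l where "l = min t (k - s)"
        have "l \<le> gdist E x r" unfolding l_def t_def by simp
        then obtain z where z: "z \<in> V" "gdist E x z = l" "gdist E z r = gdist E x r - l"
          using gd_point[OF xV rV] by blast
        have zr1: "gdist E z r = gdist E x r - min (gdist E x r) (k - s)" using z unfolding l_def t_def by simp
        have zr: "gdist E z r \<le> m0 - 2 * s - 1" "gdist E z r + l = t"
          using zr1 True tlow ks m0 L unfolding l_def t_def by arith+
        have "Uball z s \<inter> P = {}"
        proof (rule ccontr)
          assume "Uball z s \<inter> P \<noteq> {}"
          then obtain y where y: "y \<in> Uball z s" "y \<in> P" by blast
          have yV: "y \<in> V" using y unfolding Uball_def by auto
          have zy: "gdist E z y \<le> s" using y unfolding Uball_def by auto
          show False
          proof (cases "y \<in> A")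
            case True
            have "gdist E a r \<le> gdist E y a + gdist E y r" using gd_tri2[OF aV yV rV] .
            moreover have "gdist E y r \<le> gdist E z y + gdist E z r" using gd_tri2[OF yV z(1) rV] .
            moreover have "gdist E y a \<le> s" using True gd_sym[of y a] unfolding A_def Uball_def by auto
            ultimately show False using zy zr h m0 L ks unfolding m0_def by linarith
          next
            case False
            then have yB: "y \<in> B" using y unfolding P_def by auto
            have "gdist E b r \<le> gdist E y b + gdist E y r" using gd_tri2[OF bV yV rV] .
            moreover have "gdist E y r \<le> gdist E z y + gdist E z r" using gd_tri2[OF yV z(1) rV] .
            moreover have "gdist E y b \<le> s" using yB gd_sym[of y b] unfolding B_def Uball_def by auto
            ultimately show False using zy zr h m0 L ks unfolding m0_def by linarith
          qed
        qed
        moreover have "Suc s \<le> l" "l + s \<le> k" using tlow ks unfolding l_def by auto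
        ultimately show ?thesis using that z zr by blast
      next
        case False
        define l where "l = Suc s"
        have "l \<le> gdist E x r" using tlow unfolding l_def t_def by simp
        then obtain z where z: "z \<in> V" "gdist E x z = l" "gdist E z r = gdist E x r - l"
          using gd_point[OF xV rV] by blast
        have zr: "gdist E z r + l = t" using z tlow unfolding l_def t_def by auto
        have xa: "t \<le> gdist E x a + gdist E a r" using gd_tri2[OF xV aV rV] gd_sym[of a x] unfolding t_def by simp
        have xb: "t \<le> gdist E x b + gdist E b r" using gd_tri2[OF xV bV rV] gd_sym[of b x] unfolding t_def by simp
        have "Uball z s \<inter> P = {}"
        proof (rule ccontr)
          assume "Uball z s \<inter> P \<noteq> {}"
          then obtain y where y: "y \<in> Uball z s" "y \<in> P" by blast
          have yV: "y \<in> V" using y unfolding Uball_def by auto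
          have zy: "gdist E z y \<le> s" using y unfolding Uball_def by auto
          have xy: "gdist E x y \<le> gdist E x z + gdist E z y" using gd_tri[OF xV z(1) yV] .
          show False
          proof (cases "y \<in> A")
            case True
            have "gdist E x a \<le> gdist E x y + gdist E y a" using gd_tri[OF xV yV aV] .
            moreover have "gdist E y a \<le> s" using True gd_sym[of y a] unfolding A_def Uball_def by auto
            ultimately show False using xy z zy xa h m0 L ks False \<open>\<not> (t \<le> k - 3 * s - 1 + m0)\<close>
              unfolding l_def m0_def by linarith
          next
            case False
            then have yB: "y \<in> B" using y unfolding P_def by auto
            have "gdist E x b \<le> gdist E x y + gdist E y b" using gd_tri[OF xV yV bV] .
            moreover have "gdist E y b \<le> s" using yB gd_sym[of y b] unfolding B_def Uball_def by auto
            ultimately show False using xy z zy xb h m0 L ks \<open>\<not> (t \<le> k - 3 * s - 1 + m0)\<close>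
              unfolding l_def m0_def by linarith
          qed
        qed
        moreover have "Suc s \<le> l" "l + s \<le> k" using ks unfolding l_def by auto
        ultimately show ?thesis using that z zr by blast
      qed
      have K: "card (Nk x - Uball z s) + (1 + D * pp (D - 1) s) \<le> D * pp (D - 1) k"
        using KL[OF D2 xV z(1) z(2) z(3) z(4)] unfolding Nk_def .
      have sub: "{y\<in>P. R x y} \<union> {y\<in>T. R x y} \<subseteq> Nk x - Uball z s"
      proof
        fix y assume y: "y \<in> {y\<in>P. R x y} \<union> {y\<in>T. R x y}"
        have yN: "y \<in> Nk x" using y Nk_R[OF PV xV] Nk_R[OF TV xV] by blast
        have yV: "y \<in> V" using yN unfolding Nk_def by auto
        have "y \<notin> Uball z s"
        proof
          assume yU: "y \<in> Uball z s"
          then have "y \<notin> P" using zP by auto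
          then have "y \<in> T" using y by auto
          then have "t \<le> gdist E r y" using T(3) gd_sym[of r x] unfolding t_def by auto
          moreover have "gdist E r y \<le> gdist E z r + gdist E z y" using gd_tri2[OF rV z(1) yV] .
          moreover have "gdist E z y \<le> s" using yU unfolding Uball_def by auto
          ultimately show False using z by linarith
        qed
        then show "y \<in> Nk x - Uball z s" using yN by auto
      qed
      have "card {y\<in>P. R x y} + card {y\<in>T. R x y} = card ({y\<in>P. R x y} \<union> {y\<in>T. R x y})"
        by (rule card_Un_disjoint[symmetric]) (use fPR fTR TP in auto)
      also have "\<dots> \<le> card (Nk x - Uball z s)" using Nkfin by (intro card_mono[OF _ sub]) auto
      finally show ?thesis using ci K DPP unfolding N_def by linarith
    qed
  qed
  have "\<exists>c. (\<forall>v\<in>P\<union>Q. c v < N) \<and> (\<forall>u\<in>P\<union>Q. \<forall>v\<in>P\<union>Q. R u v \<longrightarrow> c u \<noteq> c v)"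
  proof (rule greedy[where \<kappa> = "\<lambda>y. gdist E r y"])
    show "finite Q" unfolding Q_def using finV by simp
    show "finite P" unfolding P_def using finV' by simp
    show "P \<inter> Q = {}" unfolding Q_def by auto
    show "\<And>u v. R u v \<Longrightarrow> R v u" unfolding R_def using padj_sym by blast
    show "\<And>u. \<not> R u u" unfolding R_def power_adj_def by simp
  qed (use c0b c0p cond in auto)
  moreover have "P \<union> Q = V" unfolding Q_def P_def using AV BV by auto
  ultimately show ?thesis unfolding proper_colouring_def N_def R_def by auto
qed

end


lemma fbound_pp: "D \<ge> 1 \<Longrightarrow> fbound m (int D) = int (D * pp (D - 1) m)"
  unfolding fbound_def pp_def by (simp add: of_nat_diff)

theorem proposition3:
  fixes V :: "'a set" and E :: "'a \<Rightarrow> 'a \<Rightarrow> bool" and k D s :: nat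
  assumes "k \<ge> 3" and "D \<ge> 3"
    and "simple_graph V E" and "connected_graph V E"
    and "max_degree V E = D"
    and "12 * int s \<le> int k - 5"
    and "kgap k V E < fbound s (int D) + 1"
  shows "diameter V E \<le> k + 2 * s"
proof (rule ccontr)
  assume contra: "\<not> diameter V E \<le> k + 2 * s"
  have finV: "finite V" using assms(3) unfolding simple_graph_def by blast
  have degb: "\<forall>v\<in>V. degree V E v \<le> D"
    using assms(5) finV unfolding max_degree_def by auto
  interpret sg V E D using assms(3,4) degb by unfold_locales
  have ks: "12 * s + 5 \<le> k" using assms(6) by linarith
  have D2: "D \<ge> 2" using assms(2) by simp
  define S where "S = {gdist E u v | u v. u \<in> V \<and> v \<in> V}"
  have Sfin: "finite S"
  proof -
    have "S = (\<lambda>(u, v). gdist E u v) ` (V \<times> V)" unfolding S_def by auto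
    then show ?thesis using finV by simp
  qed
  obtain v0 where "v0 \<in> V" using conn unfolding connected_graph_def by blast
  then have Sne: "S \<noteq> {}" unfolding S_def by blast
  have "Max S \<in> S" using Sfin Sne by (rule Max_in)
  then obtain a w where aw: "a \<in> V" "w \<in> V" "gdist E a w = diameter V E"
    unfolding S_def diameter_def by auto
  define L where "L = k + 2 * s + 1"
  have "L \<le> gdist E a w" using aw contra unfolding L_def by simp
  then obtain b where b: "b \<in> V" "gdist E a b = L" using gd_point[OF aw(1,2)] by blast
  have "L div 2 \<le> gdist E a b" using b by simp
  then obtain r where r0: "r \<in> V" "gdist E a r = L div 2" "gdist E r b = gdist E a b - L div 2"
    using gd_point[OF aw(1) b(1)] by blast
  then have r: "r \<in> V" "gdist E a r = L div 2" "gdist E r b = L - L div 2" using b by auto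
  have h: "gdist E a r + gdist E b r = L" "L div 2 \<le> gdist E a r" "L div 2 \<le> gdist E b r"
    using r gd_sym[of r b] by auto
  obtain c where c: "proper_colouring V (power_adj E k) c (D * pp (D - 1) k - D * pp (D - 1) s)"
  proof (cases "card (Uball a s) \<le> card (Uball b s)")
    case True
    then show ?thesis using colour_exists[OF D2 ks aw(1) b(1) r(1) L_def b(2) h] that by blast
  next
    case False
    have h': "gdist E b r + gdist E a r = L" using h by simp
    show ?thesis using colour_exists[OF D2 ks b(1) aw(1) r(1) L_def _ h' h(3) h(2)] False gd_sym[of b a] b that
      by fastforce
  qed
  have chi: "chromatic_number V (power_adj E k) \<le> D * pp (D - 1) k - D * pp (D - 1) s"
    unfolding chromatic_number_def using c by (intro Least_le) blast
  have DPP: "D * pp (D - 1) s \<le> D * pp (D - 1) k" using pp_mono ks by simp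
  have chi': "int (chromatic_number V (power_adj E k)) \<le> int (D * pp (D - 1) k) - int (D * pp (D - 1) s)"
    using chi DPP by linarith
  have "kgap k V E = int (D * pp (D - 1) k) + 1 - int (chromatic_number V (power_adj E k))"
    unfolding kgap_def assms(5) using fbound_pp[of D k] assms(2) by simp
  then have "kgap k V E \<ge> fbound s (int D) + 1"
    using chi' fbound_pp[of D s] assms(2) by simp
  then show False using assms(7) by simp
qed


end
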